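(* Consider an instance with $D_i=1$ for all $i\in\mathcal D$ and nonnegative integer capacities $C_j$, and let $k=|\mathcal F|$. Then the minimum delay over all $k$-regionalized solutions equals the cost of a minimum cost assignment of the instance.
   Context: An instance consists of finite sets $\mathcal D$ (demand nodes) and $\mathcal F$ (FCs), finite nonnegative travel times $\ell_{ij}$, demands $D_i\ge0$ and capacities $C_j\ge0$ with $\sum_iD_i\le\sum_jC_j$. An assignment is $x\in\mathbb R_{\ge0}^{\mathcal D\times\mathcal F}$ with $\sum_jx_{ij}=D_i$ for all $i$ and $\sum_ix_{ij}\le C_j$ for all $j$; its cost is $\sum_{ij}\ell_{ij}x_{ij}$, and a minimum cost assignment has minimum cost. An equilibrium solution is a pair $(x,\beta)$ with $x$ an assignment and $\beta\in\mathbb R^{\mathcal F}_{\ge0}$ such that $x_{ij}>0$ only if $j\in\arg\min_{j'}(\ell_{ij'}+\beta_{j'})$, and $\beta_j=0$ whenever $\sum_ix_{ij}<C_j$; its delay is $\sum_iD_i\delta_i$ with $\delta_i=\min_j(\ell_{ij}+\beta_j)$. An $r$-regionalized solution consists of partitions $\mathcal D=\mathcal D_1\sqcup\dots\sqcup\mathcal D_r$, $\mathcal F=\mathcal F_1\sqcup\dots\sqcup\mathcal F_r$ (parts may be empty) with $\sum_{i\in\mathcal D_s}D_i\le\sum_{j\in\mathcal F_s}C_j$ for each $s$, together with an equilibrium solution of each sub-instance $(\mathcal D_s,\mathcal F_s)$; its delay is the sum of the delays of these $r$ equilibrium solutions. *)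

theory Defs
  imports Main "HOL.Real"
begin

text \<open>An instance: demand nodes DD, FCs FF (finite sets), travel times l, demands Dm, capacities C.
  An assignment x is given on DD x FF (values outside are irrelevant).\<close>

definition is_assignment ::
  "'d set \<Rightarrow> 'f set \<Rightarrow> ('d \<Rightarrow> real) \<Rightarrow> ('f \<Rightarrow> real) \<Rightarrow> ('d \<Rightarrow> 'f \<Rightarrow> real) \<Rightarrow> bool" where
  "is_assignment DD FF Dm C x \<longleftrightarrow>
     (\<forall>i\<in>DD. \<forall>j\<in>FF. 0 \<le> x i j) \<and>
     (\<forall>i\<in>DD. (\<Sum>j\<in>FF. x i j) = Dm i) \<and>
     (\<forall>j\<in>FF. (\<Sum>i\<in>DD. x i j) \<le> C j)"

definition assignment_cost ::
  "'d set \<Rightarrow> 'f set \<Rightarrow> ('d \<Rightarrow> 'f \<Rightarrow> real) \<Rightarrow> ('d \<Rightarrow> 'f \<Rightarrow> real) \<Rightarrow> real" where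
  "assignment_cost DD FF l x = (\<Sum>i\<in>DD. \<Sum>j\<in>FF. l i j * x i j)"

definition is_equilibrium ::
  "'d set \<Rightarrow> 'f set \<Rightarrow> ('d \<Rightarrow> 'f \<Rightarrow> real) \<Rightarrow> ('d \<Rightarrow> real) \<Rightarrow> ('f \<Rightarrow> real)
    \<Rightarrow> ('d \<Rightarrow> 'f \<Rightarrow> real) \<Rightarrow> ('f \<Rightarrow> real) \<Rightarrow> bool" where
  "is_equilibrium DD FF l Dm C x \<beta> \<longleftrightarrow>
     is_assignment DD FF Dm C x \<and>
     (\<forall>j\<in>FF. 0 \<le> \<beta> j) \<and>
     (\<forall>i\<in>DD. \<forall>j\<in>FF. 0 < x i j \<longrightarrow> l i j + \<beta> j = (MIN j'\<in>FF. l i j' + \<beta> j')) \<and>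
     (\<forall>j\<in>FF. (\<Sum>i\<in>DD. x i j) < C j \<longrightarrow> \<beta> j = 0)"

definition eq_delay ::
  "'d set \<Rightarrow> 'f set \<Rightarrow> ('d \<Rightarrow> 'f \<Rightarrow> real) \<Rightarrow> ('d \<Rightarrow> real) \<Rightarrow> ('f \<Rightarrow> real) \<Rightarrow> real" where
  "eq_delay DD FF l Dm \<beta> = (\<Sum>i\<in>DD. Dm i * (MIN j\<in>FF. l i j + \<beta> j))"

text \<open>r-regionalized solution: the partitions are given by labellings pd, pf into parts
  0..r-1 (parts may be empty); part s carries the equilibrium solution (xs s, bs s).\<close>
definition is_regionalized ::
  "nat \<Rightarrow> 'd set \<Rightarrow> 'f set \<Rightarrow> ('d \<Rightarrow> 'f \<Rightarrow> real) \<Rightarrow> ('d \<Rightarrow> real) \<Rightarrow> ('f \<Rightarrow> real)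
    \<Rightarrow> ('d \<Rightarrow> nat) \<Rightarrow> ('f \<Rightarrow> nat) \<Rightarrow> (nat \<Rightarrow> 'd \<Rightarrow> 'f \<Rightarrow> real) \<Rightarrow> (nat \<Rightarrow> 'f \<Rightarrow> real) \<Rightarrow> bool" where
  "is_regionalized r DD FF l Dm C pd pf xs bs \<longleftrightarrow>
     (\<forall>i\<in>DD. pd i < r) \<and> (\<forall>j\<in>FF. pf j < r) \<and>
     (\<forall>s<r. (\<Sum>i\<in>{i\<in>DD. pd i = s}. Dm i) \<le> (\<Sum>j\<in>{j\<in>FF. pf j = s}. C j) \<and>
            is_equilibrium {i\<in>DD. pd i = s} {j\<in>FF. pf j = s} l Dm C (xs s) (bs s))"

definition reg_delay ::
  "nat \<Rightarrow> 'd set \<Rightarrow> 'f set \<Rightarrow> ('d \<Rightarrow> 'f \<Rightarrow> real) \<Rightarrow> ('d \<Rightarrow> real)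
    \<Rightarrow> ('d \<Rightarrow> nat) \<Rightarrow> ('f \<Rightarrow> nat) \<Rightarrow> (nat \<Rightarrow> 'f \<Rightarrow> real) \<Rightarrow> real" where
  "reg_delay r DD FF l Dm pd pf bs =
     (\<Sum>s<r. eq_delay {i\<in>DD. pd i = s} {j\<in>FF. pf j = s} l Dm (bs s))"

end

theory Submission
  imports Defs "HOL-Library.FuncSet"
begin

fun walk :: "('v \<Rightarrow> 'v \<Rightarrow> 'v) \<Rightarrow> 'v \<Rightarrow> 'v \<Rightarrow> nat \<Rightarrow> 'v" where
  "walk f a b 0 = a"
| "walk f a b (Suc 0) = b"
| "walk f a b (Suc (Suc n)) = f (walk f a b n) (walk f a b (Suc n))"

lemma closed_walk:
  fixes adj :: "'v \<Rightarrow> 'v \<Rightarrow> bool"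
  assumes fin: "finite V" and inV: "\<And>u v. adj u v \<Longrightarrow> v \<in> V"
    and ext: "\<And>u v. adj u v \<Longrightarrow> \<exists>v'. adj v v' \<and> v' \<noteq> u" and start: "adj a b"
  shows "\<exists>w p q. p < q \<and> w p = w q \<and> (\<forall>k. adj (w k) (w (Suc k))) \<and>
     (\<forall>k. w (Suc (Suc k)) \<noteq> w k) \<and> (\<forall>i j. p \<le> i \<longrightarrow> i < j \<longrightarrow> j < q \<longrightarrow> w i \<noteq> w j)"
proof -
  define nx where "nx u v = (SOME v'. adj v v' \<and> v' \<noteq> u)" for u v
  have nx: "adj v (nx u v) \<and> nx u v \<noteq> u" if "adj u v" for u v
    unfolding nx_def using someI_ex[OF ext[OF that]] .
  define w where "w = walk nx a b"
  have adjw: "adj (w k) (w (Suc k))" for k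
  proof (induction k)
    case 0 then show ?case using start by (simp add: w_def)
  next
    case (Suc k)
    have "w (Suc (Suc k)) = nx (w k) (w (Suc k))" by (simp add: w_def)
    then show ?case using nx[OF Suc] by simp
  qed
  have nb: "w (Suc (Suc k)) \<noteq> w k" for k
    using nx[OF adjw[of k]] by (simp add: w_def)
  have "w ` {1..Suc (card V)} \<subseteq> V"
  proof
    fix v assume "v \<in> w ` {1..Suc (card V)}"
    then obtain k where k: "k \<in> {1..Suc (card V)}" "v = w k" by blast
    then obtain k' where "k = Suc k'" by (cases k) auto
    then show "v \<in> V" using inV[OF adjw[of k']] k by simp
  qed
  then have "\<not> inj_on w {1..Suc (card V)}"
    using fin by (metis card_atLeastAtMost card_inj_on_le diff_Suc_1 lessI not_le)
  then obtain i j where ij: "i \<noteq> j" "w i = w j" unfolding inj_on_def by blast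
  then have ex: "\<exists>q p. p < q \<and> w p = w q"
    by (metis linorder_neqE_nat)
  define q where "q = (LEAST q. \<exists>p. p < q \<and> w p = w q)"
  obtain p where pq: "p < q" "w p = w q"
    using LeastI_ex[OF ex] unfolding q_def by blast
  have dist: "\<forall>i j. p \<le> i \<longrightarrow> i < j \<longrightarrow> j < q \<longrightarrow> w i \<noteq> w j"
  proof (intro allI impI)
    fix i j assume "p \<le> i" "i < j" "j < q"
    show "w i \<noteq> w j"
    proof
      assume "w i = w j"
      then have "q \<le> j" unfolding q_def using \<open>i < j\<close> by (intro Least_le) blast
      then show False using \<open>j < q\<close> by simp
    qed
  qed
  show ?thesis using pq adjw nb dist by blast
qed

lemma shift_sum:
  fixes g :: "nat \<Rightarrow> real"
  assumes "p \<le> q" "g p = g q"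
  shows "(\<Sum>k\<in>{p..<q}. g (Suc k)) = (\<Sum>k\<in>{p..<q}. g k)"
proof -
  have "(\<Sum>k\<in>{p..<q}. g (Suc k)) = (\<Sum>k\<in>{Suc p..<Suc q}. g k)"
    by (rule sum.shift_bounds_Suc_ivl[symmetric])
  moreover have "(\<Sum>k\<in>{p..<Suc q}. g k) = g p + (\<Sum>k\<in>{Suc p..<Suc q}. g k)"
    using assms by (intro sum.atLeast_Suc_lessThan) simp
  moreover have "(\<Sum>k\<in>{p..<Suc q}. g k) = (\<Sum>k\<in>{p..<q}. g k) + g q"
    using assms by simp
  ultimately show ?thesis using assms by simp
qed

lemma exists_direction:
  fixes N :: "('r \<times> 'c) set"
  assumes finR: "finite R" and finC: "finite Cl" and NRC: "N \<subseteq> R \<times> Cl" and r0c0: "(r0, c0) \<in> N"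
    and rowdeg: "\<And>r c. (r, c) \<in> N \<Longrightarrow> \<exists>c'. c' \<noteq> c \<and> (r, c') \<in> N"
    and coldeg: "\<And>r c. (r, c) \<in> N \<Longrightarrow> \<exists>r'. r' \<noteq> r \<and> (r', c) \<in> N"
  shows "\<exists>d::'r \<Rightarrow> 'c \<Rightarrow> real. (\<forall>r\<in>R. (\<Sum>c\<in>Cl. d r c) = 0) \<and> (\<forall>c\<in>Cl. (\<Sum>r\<in>R. d r c) = 0)
     \<and> (\<forall>r c. d r c \<noteq> 0 \<longrightarrow> (r, c) \<in> N) \<and> (\<exists>r c. d r c \<noteq> 0)"
proof -
  define adj where "adj u v \<longleftrightarrow> (\<exists>r c. u = Inl r \<and> v = Inr c \<and> (r, c) \<in> N) \<or>
      (\<exists>r c. u = Inr c \<and> v = Inl r \<and> (r, c) \<in> N)" for u v :: "'r + 'c"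
  have "\<exists>w p q. p < q \<and> w p = w q \<and> (\<forall>k. adj (w k) (w (Suc k))) \<and>
     (\<forall>k. w (Suc (Suc k)) \<noteq> w k) \<and> (\<forall>i j. p \<le> i \<longrightarrow> i < j \<longrightarrow> j < q \<longrightarrow> w i \<noteq> w j)"
  proof (rule closed_walk[where V = "Inl ` R \<union> Inr ` Cl"])
    show "finite (Inl ` R \<union> Inr ` Cl)" using finR finC by simp
    show "v \<in> Inl ` R \<union> Inr ` Cl" if "adj u v" for u v
      using that NRC unfolding adj_def by blast
    show "\<exists>v'. adj v v' \<and> v' \<noteq> u" if "adj u v" for u v
    proof -
      from that consider (a) r c where "u = Inl r" "v = Inr c" "(r, c) \<in> N"
        | (b) r c where "u = Inr c" "v = Inl r" "(r, c) \<in> N" unfolding adj_def by blast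
      then show ?thesis
      proof cases
        case a
        then obtain r' where "r' \<noteq> r" "(r', c) \<in> N" using coldeg by blast
        then show ?thesis using a unfolding adj_def by auto
      next
        case b
        then obtain c' where "c' \<noteq> c" "(r, c') \<in> N" using rowdeg by blast
        then show ?thesis using b unfolding adj_def by auto
      qed
    qed
    show "adj (Inl r0) (Inr c0)" using r0c0 unfolding adj_def by blast
  qed
  then obtain w p q where pq: "p < q" "w p = w q" and adjw: "\<And>k. adj (w k) (w (Suc k))"
    and nb: "\<And>k. w (Suc (Suc k)) \<noteq> w k"
    and dist: "\<And>i j. p \<le> i \<Longrightarrow> i < j \<Longrightarrow> j < q \<Longrightarrow> w i \<noteq> w j" by blast
  define d where "d r c = (\<Sum>k\<in>{p..<q}. of_bool (w k = Inl r \<and> w (Suc k) = Inr c)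
      - of_bool (w k = Inr c \<and> w (Suc k) = Inl r) :: real)" for r c
  have supp: "\<forall>r c. d r c \<noteq> 0 \<longrightarrow> (r, c) \<in> N"
  proof (intro allI impI)
    fix r c assume "d r c \<noteq> 0"
    then obtain k where "of_bool (w k = Inl r \<and> w (Suc k) = Inr c)
      - of_bool (w k = Inr c \<and> w (Suc k) = Inl r) \<noteq> (0::real)"
      unfolding d_def by (meson sum.neutral)
    then show "(r, c) \<in> N" using adjw[of k] unfolding adj_def by (auto split: if_splits)
  qed
  have rows: "\<forall>r\<in>R. (\<Sum>c\<in>Cl. d r c) = 0"
  proof
    fix r assume "r \<in> R"
    have A: "(\<Sum>c\<in>Cl. of_bool (w k = Inl r \<and> w (Suc k) = Inr c) :: real) = of_bool (w k = Inl r)" for k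
    proof (cases "w k = Inl r")
      case True
      then obtain c' where "w (Suc k) = Inr c'" "(r, c') \<in> N" using adjw[of k] unfolding adj_def by auto
      then have "c' \<in> Cl" using NRC by auto
      then show ?thesis using True \<open>w (Suc k) = Inr c'\<close> finC by (simp add: of_bool_def)
    qed simp
    have B: "(\<Sum>c\<in>Cl. of_bool (w k = Inr c \<and> w (Suc k) = Inl r) :: real) = of_bool (w (Suc k) = Inl r)" for k
    proof (cases "w (Suc k) = Inl r")
      case True
      then obtain c' where "w k = Inr c'" "(r, c') \<in> N" using adjw[of k] unfolding adj_def by auto
      then have "c' \<in> Cl" using NRC by auto
      then show ?thesis using True \<open>w k = Inr c'\<close> finC by (simp add: of_bool_def)
    qed simp
    have "(\<Sum>c\<in>Cl. d r c) = (\<Sum>k\<in>{p..<q}. \<Sum>c\<in>Cl. of_bool (w k = Inl r \<and> w (Suc k) = Inr c)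
      - of_bool (w k = Inr c \<and> w (Suc k) = Inl r) :: real)"
      unfolding d_def by (rule sum.swap)
    also have "\<dots> = (\<Sum>k\<in>{p..<q}. of_bool (w k = Inl r) - of_bool (w (Suc k) = Inl r))"
      by (simp add: sum_subtractf A B)
    also have "\<dots> = 0"
      using shift_sum[of p q "\<lambda>k. of_bool (w k = Inl r)"] pq by (simp add: sum_subtractf)
    finally show "(\<Sum>c\<in>Cl. d r c) = 0" .
  qed
  have cols: "\<forall>c\<in>Cl. (\<Sum>r\<in>R. d r c) = 0"
  proof
    fix c assume "c \<in> Cl"
    have A: "(\<Sum>r\<in>R. of_bool (w k = Inl r \<and> w (Suc k) = Inr c) :: real) = of_bool (w (Suc k) = Inr c)" for k
    proof (cases "w (Suc k) = Inr c")
      case True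
      then obtain r' where "w k = Inl r'" "(r', c) \<in> N" using adjw[of k] unfolding adj_def by auto
      then have "r' \<in> R" using NRC by auto
      then show ?thesis using True \<open>w k = Inl r'\<close> finR by (simp add: of_bool_def)
    qed simp
    have B: "(\<Sum>r\<in>R. of_bool (w k = Inr c \<and> w (Suc k) = Inl r) :: real) = of_bool (w k = Inr c)" for k
    proof (cases "w k = Inr c")
      case True
      then obtain r' where "w (Suc k) = Inl r'" "(r', c) \<in> N" using adjw[of k] unfolding adj_def by auto
      then have "r' \<in> R" using NRC by auto
      then show ?thesis using True \<open>w (Suc k) = Inl r'\<close> finR by (simp add: of_bool_def)
    qed simp
    have "(\<Sum>r\<in>R. d r c) = (\<Sum>k\<in>{p..<q}. \<Sum>r\<in>R. of_bool (w k = Inl r \<and> w (Suc k) = Inr c)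
      - of_bool (w k = Inr c \<and> w (Suc k) = Inl r) :: real)"
      unfolding d_def by (rule sum.swap)
    also have "\<dots> = (\<Sum>k\<in>{p..<q}. of_bool (w (Suc k) = Inr c) - of_bool (w k = Inr c))"
      by (simp add: sum_subtractf A B)
    also have "\<dots> = 0"
      using shift_sum[of p q "\<lambda>k. of_bool (w k = Inr c)"] pq by (simp add: sum_subtractf)
    finally show "(\<Sum>r\<in>R. d r c) = 0" .
  qed
  have same: "(w k = w p \<and> w (Suc k) = w (Suc p)) \<longleftrightarrow> k = p" if "k \<in> {p..<q}" for k
  proof
    assume "w k = w p \<and> w (Suc k) = w (Suc p)"
    then show "k = p" using dist[of p k] that by (cases "p < k") auto
  qed simp
  have neq: "w p \<noteq> w (Suc p)" using adjw[of p] unfolding adj_def by auto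
  have opp: "\<not> (w k = w (Suc p) \<and> w (Suc k) = w p)" if "k \<in> {p..<q}" for k
  proof
    assume h: "w k = w (Suc p) \<and> w (Suc k) = w p"
    have "Suc k = q"
    proof (rule ccontr)
      assume "Suc k \<noteq> q"
      then have "Suc k < q" using that by auto
      moreover have "p < Suc k" using that by auto
      ultimately show False using dist[of p "Suc k"] h by auto
    qed
    have kin: "p \<le> k" using that by simp
    consider "k = p" | "k = Suc p" | "Suc p < k" using kin by linarith
    then show False
    proof cases
      case 1 then show ?thesis using h neq by simp
    next
      case 2 then show ?thesis using h nb[of p] by simp
    next
      case 3 then show ?thesis using dist[of "Suc p" k] h \<open>Suc k = q\<close> by auto
    qed
  qed
  have nz: "\<exists>r c. d r c \<noteq> 0"
  proof -
    from adjw[of p] consider (a) r c where "w p = Inl r" "w (Suc p) = Inr c"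
      | (b) r c where "w p = Inr c" "w (Suc p) = Inl r" unfolding adj_def by blast
    then show ?thesis
    proof cases
      case a
      have "d r c = (\<Sum>k\<in>{p..<q}. of_bool (k = p) - 0)"
        unfolding d_def by (rule sum.cong) (use same opp a in auto)
      also have "\<dots> = 1" using pq by simp
      finally have "d r c \<noteq> 0" by simp
      then show ?thesis by blast
    next
      case b
      have "d r c = (\<Sum>k\<in>{p..<q}. 0 - of_bool (k = p))"
        unfolding d_def by (rule sum.cong) (use same opp b in auto)
      also have "\<dots> = -1" using pq by (simp add: sum_negf)
      finally have "d r c \<noteq> 0" by simp
      then show ?thesis by blast
    qed
  qed
  show ?thesis using rows cols supp nz by blast
qed

definition nonint :: "'r set \<Rightarrow> 'c set \<Rightarrow> ('r \<Rightarrow> 'c \<Rightarrow> real) \<Rightarrow> ('r \<times> 'c) set" where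
  "nonint R Cl y = {e \<in> R \<times> Cl. y (fst e) (snd e) \<notin> \<int>}"

lemma push_step:
  fixes y w d :: "'r \<Rightarrow> 'c \<Rightarrow> real"
  assumes finR: "finite R" and finC: "finite Cl" and nonneg: "\<forall>r\<in>R. \<forall>c\<in>Cl. 0 \<le> y r c"
    and drow: "\<forall>r\<in>R. (\<Sum>c\<in>Cl. d r c) = 0" and dcol: "\<forall>c\<in>Cl. (\<Sum>r\<in>R. d r c) = 0"
    and dsupp: "\<forall>r\<in>R. \<forall>c\<in>Cl. d r c \<noteq> 0 \<longrightarrow> y r c \<notin> \<int>"
    and dnz: "\<exists>r\<in>R. \<exists>c\<in>Cl. d r c \<noteq> 0"
  shows "\<exists>y2. (\<forall>r\<in>R. \<forall>c\<in>Cl. 0 \<le> y2 r c) \<and> (\<forall>r\<in>R. (\<Sum>c\<in>Cl. y2 r c) = (\<Sum>c\<in>Cl. y r c))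
    \<and> (\<forall>c\<in>Cl. (\<Sum>r\<in>R. y2 r c) = (\<Sum>r\<in>R. y r c))
    \<and> (\<Sum>r\<in>R. \<Sum>c\<in>Cl. w r c * y2 r c) \<le> (\<Sum>r\<in>R. \<Sum>c\<in>Cl. w r c * y r c)
    \<and> nonint R Cl y2 \<subset> nonint R Cl y"
proof -
  define sg :: real where "sg = (if (\<Sum>r\<in>R. \<Sum>c\<in>Cl. w r c * d r c) \<le> 0 then 1 else -1)"
  define d' where "d' r c = sg * d r c" for r c
  have sg0: "sg \<noteq> 0" unfolding sg_def by simp
  have d'nz: "d' r c \<noteq> 0 \<longleftrightarrow> d r c \<noteq> 0" for r c using sg0 unfolding d'_def by simp
  have d'row: "\<forall>r\<in>R. (\<Sum>c\<in>Cl. d' r c) = 0" using drow unfolding d'_def by (simp add: sum_distrib_left[symmetric])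
  have d'col: "\<forall>c\<in>Cl. (\<Sum>r\<in>R. d' r c) = 0" using dcol unfolding d'_def by (simp add: sum_distrib_left[symmetric])
  have d'cost: "(\<Sum>r\<in>R. \<Sum>c\<in>Cl. w r c * d' r c) \<le> 0"
  proof -
    have "(\<Sum>r\<in>R. \<Sum>c\<in>Cl. w r c * d' r c) = sg * (\<Sum>r\<in>R. \<Sum>c\<in>Cl. w r c * d r c)"
      unfolding d'_def by (simp add: sum_distrib_left algebra_simps)
    then show ?thesis unfolding sg_def by (auto split: if_splits)
  qed
  define T where "T = {e \<in> R \<times> Cl. d' (fst e) (snd e) \<noteq> 0}"
  define ratio where "ratio e = (if d' (fst e) (snd e) > 0
     then (of_int (ceiling (y (fst e) (snd e))) - y (fst e) (snd e)) / d' (fst e) (snd e)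
     else (of_int (floor (y (fst e) (snd e))) - y (fst e) (snd e)) / d' (fst e) (snd e))" for e
  have finT: "finite T" unfolding T_def using finR finC by simp
  have neT: "T \<noteq> {}" unfolding T_def using dnz d'nz by auto
  have Tni: "y (fst e) (snd e) \<notin> \<int>" if "e \<in> T" for e
    using that dsupp d'nz unfolding T_def by auto
  have fl: "of_int (floor x) < x" "x < of_int (ceiling x)" if "x \<notin> \<int>" for x :: real
  proof -
    show "of_int (floor x) < x" using that of_int_floor_le[of x] by (metis Ints_of_int order_less_le)
    show "x < of_int (ceiling x)" using that le_of_int_ceiling[of x] by (metis Ints_of_int order_less_le)
  qed
  have ratio_pos: "ratio e > 0" if "e \<in> T" for e
  proof -
    have "d' (fst e) (snd e) \<noteq> 0" using that unfolding T_def by auto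
    then show ?thesis using fl[OF Tni[OF that]] unfolding ratio_def
      by (auto simp: divide_pos_pos divide_neg_neg)
  qed
  define t where "t = Min (ratio ` T)"
  have t_in: "t \<in> ratio ` T" unfolding t_def using finT neT by simp
  then obtain es where es: "es \<in> T" "ratio es = t" by auto
  have t_le: "t \<le> ratio e" if "e \<in> T" for e unfolding t_def using finT that by simp
  have tpos: "t > 0" using ratio_pos[OF es(1)] es(2) by simp
  define y2 where "y2 r c = y r c + t * d' r c" for r c
  have bounds: "of_int (floor (y r c)) \<le> y2 r c \<and> y2 r c \<le> of_int (ceiling (y r c))"
    if "(r, c) \<in> T" for r c
  proof -
    have yn: "y r c \<notin> \<int>" using Tni[OF that] by simp
    have tl: "t \<le> ratio (r, c)" using t_le[OF that] .
    show ?thesis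
    proof (cases "d' r c > 0")
      case True
      then have "t * d' r c \<le> of_int (ceiling (y r c)) - y r c"
        using tl unfolding ratio_def by (simp add: le_divide_eq)
      moreover have "0 \<le> t * d' r c" using True tpos by simp
      ultimately show ?thesis using fl[OF yn] unfolding y2_def by linarith
    next
      case False
      then have neg: "d' r c < 0" using that unfolding T_def by auto
      then have "t * d' r c \<ge> of_int (floor (y r c)) - y r c"
        using tl False unfolding ratio_def by (simp add: le_divide_eq) 
      moreover have "t * d' r c \<le> 0" using neg tpos by (simp add: mult_nonneg_nonpos)
      ultimately show ?thesis using fl[OF yn] unfolding y2_def by linarith
    qed
  qed
  have es_int: "y2 (fst es) (snd es) \<in> \<int>"
  proof -
    have dne: "d' (fst es) (snd es) \<noteq> 0" using es unfolding T_def by auto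
    have "y2 (fst es) (snd es) = y (fst es) (snd es) + ratio es * d' (fst es) (snd es)"
      unfolding y2_def using es by simp
    also have "\<dots> = (if d' (fst es) (snd es) > 0 then of_int (ceiling (y (fst es) (snd es)))
        else of_int (floor (y (fst es) (snd es))))"
      unfolding ratio_def using dne by auto
    finally show ?thesis by simp
  qed
  have nn: "\<forall>r\<in>R. \<forall>c\<in>Cl. 0 \<le> y2 r c"
  proof (intro ballI)
    fix r c assume rc: "r \<in> R" "c \<in> Cl"
    show "0 \<le> y2 r c"
    proof (cases "(r, c) \<in> T")
      case True
      have "0 \<le> floor (y r c)" using nonneg rc by simp
      then show ?thesis using bounds[OF True] by linarith
    next
      case False
      then show ?thesis using rc nonneg unfolding T_def y2_def by auto
    qed
  qed
  have rowsum: "\<forall>r\<in>R. (\<Sum>c\<in>Cl. y2 r c) = (\<Sum>c\<in>Cl. y r c)"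
    using d'row unfolding y2_def by (simp add: sum.distrib sum_distrib_left[symmetric])
  have colsum: "\<forall>c\<in>Cl. (\<Sum>r\<in>R. y2 r c) = (\<Sum>r\<in>R. y r c)"
    using d'col unfolding y2_def by (simp add: sum.distrib sum_distrib_left[symmetric])
  have cost: "(\<Sum>r\<in>R. \<Sum>c\<in>Cl. w r c * y2 r c) \<le> (\<Sum>r\<in>R. \<Sum>c\<in>Cl. w r c * y r c)"
  proof -
    have "(\<Sum>r\<in>R. \<Sum>c\<in>Cl. w r c * y2 r c) = (\<Sum>r\<in>R. \<Sum>c\<in>Cl. w r c * y r c) + t * (\<Sum>r\<in>R. \<Sum>c\<in>Cl. w r c * d' r c)"
      unfolding y2_def by (simp add: algebra_simps sum.distrib sum_distrib_left)
    moreover have "t * (\<Sum>r\<in>R. \<Sum>c\<in>Cl. w r c * d' r c) \<le> 0"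
      using tpos d'cost by (simp add: mult_nonneg_nonpos)
    ultimately show ?thesis by simp
  qed
  have sub: "nonint R Cl y2 \<subseteq> nonint R Cl y"
  proof
    fix e assume "e \<in> nonint R Cl y2"
    then obtain r c where e: "e = (r, c)" "r \<in> R" "c \<in> Cl" "y2 r c \<notin> \<int>" unfolding nonint_def by auto
    show "e \<in> nonint R Cl y"
    proof (cases "d' r c = 0")
      case True then show ?thesis using e unfolding nonint_def y2_def by auto
    next
      case False then show ?thesis using e dsupp d'nz unfolding nonint_def by auto
    qed
  qed
  have "es \<in> nonint R Cl y" "es \<notin> nonint R Cl y2"
    using es Tni es_int unfolding nonint_def T_def by auto
  then have "nonint R Cl y2 \<subset> nonint R Cl y" using sub by blast
  then show ?thesis using nn rowsum colsum cost by blast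
qed

lemma integral_improve:
  fixes y w :: "'r \<Rightarrow> 'c \<Rightarrow> real"
  assumes finR: "finite R" and finC: "finite Cl" and nonneg: "\<forall>r\<in>R. \<forall>c\<in>Cl. 0 \<le> y r c"
    and rowint: "\<forall>r\<in>R. (\<Sum>c\<in>Cl. y r c) \<in> \<int>" and colint: "\<forall>c\<in>Cl. (\<Sum>r\<in>R. y r c) \<in> \<int>"
  shows "\<exists>y'. (\<forall>r\<in>R. \<forall>c\<in>Cl. 0 \<le> y' r c \<and> y' r c \<in> \<int>) \<and> (\<forall>r\<in>R. (\<Sum>c\<in>Cl. y' r c) = (\<Sum>c\<in>Cl. y r c))
    \<and> (\<forall>c\<in>Cl. (\<Sum>r\<in>R. y' r c) = (\<Sum>r\<in>R. y r c))
    \<and> (\<Sum>r\<in>R. \<Sum>c\<in>Cl. w r c * y' r c) \<le> (\<Sum>r\<in>R. \<Sum>c\<in>Cl. w r c * y r c)"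
  using nonneg rowint colint
proof (induction "card (nonint R Cl y)" arbitrary: y rule: less_induct)
  case less
  have finN: "finite (nonint R Cl y)" unfolding nonint_def using finR finC by simp
  show ?case
  proof (cases "nonint R Cl y = {}")
    case True
    then have "\<forall>r\<in>R. \<forall>c\<in>Cl. y r c \<in> \<int>" unfolding nonint_def by auto
    then show ?thesis using less.prems by blast
  next
    case False
    then obtain r0 c0 where r0c0: "(r0, c0) \<in> nonint R Cl y" by auto
    define N where "N = nonint R Cl y"
    have NRC: "N \<subseteq> R \<times> Cl" unfolding N_def nonint_def by auto
    have rowdeg: "\<exists>c'. c' \<noteq> c \<and> (r, c') \<in> N" if "(r, c) \<in> N" for r c
    proof (rule ccontr)
      assume "\<not> ?thesis"
      then have ints: "\<forall>c'\<in>Cl - {c}. y r c' \<in> \<int>" using that unfolding N_def nonint_def by auto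
      have rc: "r \<in> R" "c \<in> Cl" "y r c \<notin> \<int>" using that unfolding N_def nonint_def by auto
      have "(\<Sum>c'\<in>Cl. y r c') = y r c + (\<Sum>c'\<in>Cl - {c}. y r c')"
        using finC rc by (simp add: sum.remove)
      then have "y r c = (\<Sum>c'\<in>Cl. y r c') - (\<Sum>c'\<in>Cl - {c}. y r c')" by simp
      moreover have "(\<Sum>c'\<in>Cl - {c}. y r c') \<in> \<int>" using ints by (intro Ints_sum) auto
      ultimately have "y r c \<in> \<int>" using less.prems(2) rc by (simp add: Ints_diff)
      then show False using rc by simp
    qed
    have coldeg: "\<exists>r'. r' \<noteq> r \<and> (r', c) \<in> N" if "(r, c) \<in> N" for r c
    proof (rule ccontr)
      assume "\<not> ?thesis"
      then have ints: "\<forall>r'\<in>R - {r}. y r' c \<in> \<int>" using that unfolding N_def nonint_def by auto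
      have rc: "r \<in> R" "c \<in> Cl" "y r c \<notin> \<int>" using that unfolding N_def nonint_def by auto
      have "(\<Sum>r'\<in>R. y r' c) = y r c + (\<Sum>r'\<in>R - {r}. y r' c)"
        using finR rc by (simp add: sum.remove)
      then have "y r c = (\<Sum>r'\<in>R. y r' c) - (\<Sum>r'\<in>R - {r}. y r' c)" by simp
      moreover have "(\<Sum>r'\<in>R - {r}. y r' c) \<in> \<int>" using ints by (intro Ints_sum) auto
      ultimately have "y r c \<in> \<int>" using less.prems(3) rc by (simp add: Ints_diff)
      then show False using rc by simp
    qed
    obtain d :: "'r \<Rightarrow> 'c \<Rightarrow> real" where d: "\<forall>r\<in>R. (\<Sum>c\<in>Cl. d r c) = 0" "\<forall>c\<in>Cl. (\<Sum>r\<in>R. d r c) = 0"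
      "\<forall>r c. d r c \<noteq> 0 \<longrightarrow> (r, c) \<in> N" "\<exists>r c. d r c \<noteq> 0"
      using exists_direction[OF finR finC NRC r0c0[folded N_def] rowdeg coldeg] by blast
    have dsupp: "\<forall>r\<in>R. \<forall>c\<in>Cl. d r c \<noteq> 0 \<longrightarrow> y r c \<notin> \<int>"
      using d(3) unfolding N_def nonint_def by auto
    have dnz: "\<exists>r\<in>R. \<exists>c\<in>Cl. d r c \<noteq> 0" using d(3,4) NRC by blast
    obtain y2 where y2: "\<forall>r\<in>R. \<forall>c\<in>Cl. 0 \<le> y2 r c" "\<forall>r\<in>R. (\<Sum>c\<in>Cl. y2 r c) = (\<Sum>c\<in>Cl. y r c)"
      "\<forall>c\<in>Cl. (\<Sum>r\<in>R. y2 r c) = (\<Sum>r\<in>R. y r c)"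
      "(\<Sum>r\<in>R. \<Sum>c\<in>Cl. w r c * y2 r c) \<le> (\<Sum>r\<in>R. \<Sum>c\<in>Cl. w r c * y r c)"
      "nonint R Cl y2 \<subset> nonint R Cl y"
      using push_step[OF finR finC less.prems(1) d(1) d(2) dsupp dnz, of w] by blast
    have "card (nonint R Cl y2) < card (nonint R Cl y)"
      using psubset_card_mono[OF finN y2(5)] .
    moreover have "\<forall>r\<in>R. (\<Sum>c\<in>Cl. y2 r c) \<in> \<int>" "\<forall>c\<in>Cl. (\<Sum>r\<in>R. y2 r c) \<in> \<int>"
      using y2(2,3) less.prems(2,3) by auto
    ultimately obtain y' where y': "\<forall>r\<in>R. \<forall>c\<in>Cl. 0 \<le> y' r c \<and> y' r c \<in> \<int>"
      "\<forall>r\<in>R. (\<Sum>c\<in>Cl. y' r c) = (\<Sum>c\<in>Cl. y2 r c)" "\<forall>c\<in>Cl. (\<Sum>r\<in>R. y' r c) = (\<Sum>r\<in>R. y2 r c)"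
      "(\<Sum>r\<in>R. \<Sum>c\<in>Cl. w r c * y' r c) \<le> (\<Sum>r\<in>R. \<Sum>c\<in>Cl. w r c * y2 r c)"
      using less.hyps[of y2] y2(1) by blast
    show ?thesis using y' y2 by (intro exI[of _ y']) auto
  qed
qed

lemma sum_option:
  assumes "finite DD"
  shows "(\<Sum>r\<in>insert None (Some ` DD). f r) = f None + (\<Sum>i\<in>DD. f (Some i))"
  using assms by (simp add: sum.reindex)

lemma onehot:
  fixes v :: "'f \<Rightarrow> real"
  assumes "finite FF" "\<forall>j\<in>FF. 0 \<le> v j \<and> v j \<in> \<int>" "(\<Sum>j\<in>FF. v j) = 1"
  shows "\<exists>j\<in>FF. v j = 1 \<and> (\<forall>j'\<in>FF. j' \<noteq> j \<longrightarrow> v j' = 0)"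
proof -
  obtain j where j: "j \<in> FF" "v j \<noteq> 0"
    using assms(3) by (metis sum.neutral zero_neq_one)
  obtain n where n: "v j = of_int n" using assms(2) j(1) by (meson Ints_cases)
  have "0 \<le> v j" using assms(2) j(1) by simp
  then have "0 \<le> n" "n \<noteq> 0" using n j(2) by simp_all
  then have "v j \<ge> 1" using n by simp
  have split: "(\<Sum>j\<in>FF. v j) = v j + (\<Sum>j'\<in>FF - {j}. v j')"
    using assms(1) j(1) by (simp add: sum.remove)
  have rest: "(\<Sum>j'\<in>FF - {j}. v j') \<ge> 0" using assms(2) by (intro sum_nonneg) auto
  have vj: "v j = 1" using split rest \<open>v j \<ge> 1\<close> assms(3) by linarith
  then have "(\<Sum>j'\<in>FF - {j}. v j') = 0" using split assms(3) by simp
  then have "\<forall>j'\<in>FF - {j}. v j' = 0"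
    using sum_nonneg_eq_0_iff[of "FF - {j}" v] assms(1,2) by auto
  then show ?thesis using vj j(1) by blast
qed

definition ind :: "('d \<Rightarrow> 'f) \<Rightarrow> 'd \<Rightarrow> 'f \<Rightarrow> real" where
  "ind \<sigma> i j = (if \<sigma> i = j then 1 else 0)"

lemma is_assignment_cong:
  assumes "\<forall>i\<in>DD. \<forall>j\<in>FF. x i j = x' i j"
  shows "is_assignment DD FF Dm C x = is_assignment DD FF Dm C x'"
  using assms unfolding is_assignment_def by (simp cong: sum.cong)

lemma cost_cong:
  assumes "\<forall>i\<in>DD. \<forall>j\<in>FF. x i j = x' i j"
  shows "assignment_cost DD FF l x = assignment_cost DD FF l x'"
  using assms unfolding assignment_cost_def by (simp cong: sum.cong)

lemma round_assign:
  fixes C :: "'f \<Rightarrow> nat" and x :: "'d \<Rightarrow> 'f \<Rightarrow> real"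
  assumes finD: "finite DD" and finF: "finite FF"
    and asg: "is_assignment DD FF (\<lambda>_. 1) (\<lambda>j. real (C j)) x"
  shows "\<exists>\<sigma>\<in>DD \<rightarrow>\<^sub>E FF. is_assignment DD FF (\<lambda>_. 1) (\<lambda>j. real (C j)) (ind \<sigma>) \<and>
     assignment_cost DD FF l (ind \<sigma>) \<le> assignment_cost DD FF l x"
proof -
  have xn: "\<forall>i\<in>DD. \<forall>j\<in>FF. 0 \<le> x i j" and xr: "\<forall>i\<in>DD. (\<Sum>j\<in>FF. x i j) = 1"
    and xc: "\<forall>j\<in>FF. (\<Sum>i\<in>DD. x i j) \<le> real (C j)"
    using asg unfolding is_assignment_def by auto
  define R where "R = insert None (Some ` DD)"
  define y where "y r j = (case r of None \<Rightarrow> real (C j) - (\<Sum>i\<in>DD. x i j) | Some i \<Rightarrow> x i j)" for r j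
  define w where "w r j = (case r of None \<Rightarrow> 0 | Some i \<Rightarrow> l i j)" for r j
  have finR: "finite R" unfolding R_def using finD by simp
  have SR: "(\<Sum>r\<in>R. f r) = f None + (\<Sum>i\<in>DD. f (Some i))" for f :: "_ \<Rightarrow> real"
    unfolding R_def using sum_option[OF finD] .
  have nonneg: "\<forall>r\<in>R. \<forall>c\<in>FF. 0 \<le> y r c"
    using xn xc unfolding R_def y_def by auto
  have rowint: "\<forall>r\<in>R. (\<Sum>c\<in>FF. y r c) \<in> \<int>"
  proof
    fix r assume "r \<in> R"
    show "(\<Sum>c\<in>FF. y r c) \<in> \<int>"
    proof (cases r)
      case None
      have "(\<Sum>c\<in>FF. y r c) = (\<Sum>c\<in>FF. real (C c)) - (\<Sum>c\<in>FF. \<Sum>i\<in>DD. x i c)"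
        using None unfolding y_def by (simp add: sum_subtractf)
      also have "(\<Sum>c\<in>FF. \<Sum>i\<in>DD. x i c) = (\<Sum>i\<in>DD. \<Sum>c\<in>FF. x i c)" by (rule sum.swap)
      also have "\<dots> = real (card DD)" using xr by simp
      finally have "(\<Sum>c\<in>FF. y r c) = real (\<Sum>c\<in>FF. C c) - real (card DD)" by simp
      then show ?thesis by (metis Ints_diff Ints_of_nat)
    next
      case (Some i)
      then have "i \<in> DD" using \<open>r \<in> R\<close> unfolding R_def by auto
      then show ?thesis using Some xr unfolding y_def by simp
    qed
  qed
  have colsum: "\<forall>c\<in>FF. (\<Sum>r\<in>R. y r c) = real (C c)"
    unfolding SR y_def by simp
  then have colint: "\<forall>c\<in>FF. (\<Sum>r\<in>R. y r c) \<in> \<int>" by simp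
  obtain y' where y': "\<forall>r\<in>R. \<forall>c\<in>FF. 0 \<le> y' r c \<and> y' r c \<in> \<int>"
    "\<forall>r\<in>R. (\<Sum>c\<in>FF. y' r c) = (\<Sum>c\<in>FF. y r c)" "\<forall>c\<in>FF. (\<Sum>r\<in>R. y' r c) = (\<Sum>r\<in>R. y r c)"
    "(\<Sum>r\<in>R. \<Sum>c\<in>FF. w r c * y' r c) \<le> (\<Sum>r\<in>R. \<Sum>c\<in>FF. w r c * y r c)"
    using integral_improve[OF finR finF nonneg rowint colint, of w] by blast
  define x' where "x' i j = y' (Some i) j" for i j
  have SomeR: "Some i \<in> R" if "i \<in> DD" for i using that unfolding R_def by auto
  have x'n: "\<forall>i\<in>DD. \<forall>j\<in>FF. 0 \<le> x' i j \<and> x' i j \<in> \<int>" using y'(1) SomeR unfolding x'_def by auto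
  have x'r: "\<forall>i\<in>DD. (\<Sum>j\<in>FF. x' i j) = 1"
  proof
    fix i assume "i \<in> DD"
    then show "(\<Sum>j\<in>FF. x' i j) = 1" using y'(2) SomeR[of i] xr unfolding x'_def y_def by simp
  qed
  have x'c: "\<forall>j\<in>FF. (\<Sum>i\<in>DD. x' i j) \<le> real (C j)"
  proof
    fix j assume j: "j \<in> FF"
    have "y' None j + (\<Sum>i\<in>DD. x' i j) = real (C j)"
      using y'(3) colsum j unfolding SR x'_def by simp
    moreover have "0 \<le> y' None j" using y'(1) j unfolding R_def by auto
    ultimately show "(\<Sum>i\<in>DD. x' i j) \<le> real (C j)" by linarith
  qed
  have oh: "\<forall>i\<in>DD. \<exists>j\<in>FF. x' i j = 1 \<and> (\<forall>j'\<in>FF. j' \<noteq> j \<longrightarrow> x' i j' = 0)"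
    using onehot[OF finF] x'n x'r by blast
  define \<sigma> where "\<sigma> = (\<lambda>i\<in>DD. SOME j. j \<in> FF \<and> x' i j = 1 \<and> (\<forall>j'\<in>FF. j' \<noteq> j \<longrightarrow> x' i j' = 0))"
  have \<sigma>: "\<sigma> i \<in> FF \<and> x' i (\<sigma> i) = 1 \<and> (\<forall>j'\<in>FF. j' \<noteq> \<sigma> i \<longrightarrow> x' i j' = 0)" if "i \<in> DD" for i
    unfolding \<sigma>_def using that someI_ex[OF oh[rule_format, OF that, unfolded Bex_def]] by simp
  have \<sigma>E: "\<sigma> \<in> DD \<rightarrow>\<^sub>E FF" using \<sigma> unfolding \<sigma>_def by auto
  have eq: "\<forall>i\<in>DD. \<forall>j\<in>FF. ind \<sigma> i j = x' i j"
    using \<sigma> unfolding ind_def by fastforce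
  have "is_assignment DD FF (\<lambda>_. 1) (\<lambda>j. real (C j)) x'"
    unfolding is_assignment_def using x'n x'r x'c by auto
  then have A: "is_assignment DD FF (\<lambda>_. 1) (\<lambda>j. real (C j)) (ind \<sigma>)"
    using is_assignment_cong[OF eq] by simp
  have "assignment_cost DD FF l (ind \<sigma>) = assignment_cost DD FF l x'"
    using cost_cong[OF eq] .
  also have "\<dots> = (\<Sum>r\<in>R. \<Sum>c\<in>FF. w r c * y' r c)"
    unfolding SR assignment_cost_def w_def x'_def by simp
  also have "\<dots> \<le> (\<Sum>r\<in>R. \<Sum>c\<in>FF. w r c * y r c)" by (rule y'(4))
  also have "\<dots> = assignment_cost DD FF l x"
    unfolding SR assignment_cost_def w_def y_def by simp
  finally show ?thesis using A \<sigma>E by blast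
qed

lemma eq_bound:
  assumes eq: "is_equilibrium D F l (\<lambda>_. 1) C x \<beta>" and i: "i \<in> D" and finF: "finite F"
  shows "(\<Sum>j\<in>F. l i j * x i j) \<le> 1 * (MIN j\<in>F. l i j + \<beta> j)"
proof -
  have xn: "\<forall>j\<in>F. 0 \<le> x i j" and xr: "(\<Sum>j\<in>F. x i j) = 1" and bn: "\<forall>j\<in>F. 0 \<le> \<beta> j"
    and tight: "\<forall>j\<in>F. 0 < x i j \<longrightarrow> l i j + \<beta> j = (MIN j'\<in>F. l i j' + \<beta> j')"
    using eq i unfolding is_equilibrium_def is_assignment_def by auto
  define m where "m = (MIN j'\<in>F. l i j' + \<beta> j')"
  have "(\<Sum>j\<in>F. l i j * x i j) \<le> (\<Sum>j\<in>F. m * x i j)"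
  proof (rule sum_mono)
    fix j assume j: "j \<in> F"
    show "l i j * x i j \<le> m * x i j"
    proof (cases "x i j > 0")
      case True
      then have "l i j \<le> m" using tight bn j unfolding m_def by force
      then show ?thesis using True by (simp add: mult_right_mono)
    next
      case False
      then have "x i j = 0" using xn j by force
      then show ?thesis by simp
    qed
  qed
  also have "\<dots> = m" using xr by (simp add: sum_distrib_left[symmetric])
  finally show ?thesis unfolding m_def by simp
qed

theorem theorem4p2:
  fixes DD :: "'d set" and FF :: "'f set"
    and l :: "'d \<Rightarrow> 'f \<Rightarrow> real" and C :: "'f \<Rightarrow> nat"
  assumes "finite DD" and "finite FF"
    and "\<forall>i\<in>DD. \<forall>j\<in>FF. 0 \<le> l i j"
    and "(\<Sum>i\<in>DD. (1::real)) \<le> (\<Sum>j\<in>FF. real (C j))"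
  shows "\<exists>c.
     (\<exists>x. is_assignment DD FF (\<lambda>_. 1) (\<lambda>j. real (C j)) x \<and> assignment_cost DD FF l x = c) \<and>
     (\<forall>x. is_assignment DD FF (\<lambda>_. 1) (\<lambda>j. real (C j)) x \<longrightarrow> c \<le> assignment_cost DD FF l x) \<and>
     (\<exists>pd pf xs bs. is_regionalized (card FF) DD FF l (\<lambda>_. 1) (\<lambda>j. real (C j)) pd pf xs bs \<and>
                    reg_delay (card FF) DD FF l (\<lambda>_. 1) pd pf bs = c) \<and>
     (\<forall>pd pf xs bs. is_regionalized (card FF) DD FF l (\<lambda>_. 1) (\<lambda>j. real (C j)) pd pf xs bs \<longrightarrow>
                    c \<le> reg_delay (card FF) DD FF l (\<lambda>_. 1) pd pf bs)"
proof -
  note finD = assms(1) and finF = assms(2)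
  let ?A = "is_assignment DD FF (\<lambda>_. 1) (\<lambda>j. real (C j))"
  let ?cost = "assignment_cost DD FF l"
  define T where "T = (\<Sum>j\<in>FF. real (C j))"
  have cardT: "real (card DD) \<le> T" using assms(4) unfolding T_def by simp
  define x0 where "x0 i j = real (C j) / T" for i :: 'd and j :: 'f
  have x0: "?A x0"
  proof (cases "DD = {}")
    case True then show ?thesis unfolding is_assignment_def x0_def T_def by (simp add: sum_nonneg)
  next
    case False
    then have "card DD > 0" using finD by (simp add: card_gt_0_iff)
    then have Tpos: "T > 0" using cardT by linarith
    have "\<forall>i\<in>DD. (\<Sum>j\<in>FF. x0 i j) = 1"
      unfolding x0_def using Tpos by (simp add: sum_divide_distrib[symmetric] T_def)
    moreover have "(\<Sum>i\<in>DD. x0 i j) \<le> real (C j)" for j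
    proof -
      have "(\<Sum>i\<in>DD. x0 i j) = real (card DD) * real (C j) / T" unfolding x0_def by simp
      also have "\<dots> \<le> T * real (C j) / T"
        using cardT Tpos by (intro divide_right_mono mult_right_mono) auto
      also have "\<dots> = real (C j)" using Tpos by simp
      finally show ?thesis .
    qed
    ultimately show ?thesis unfolding is_assignment_def x0_def using Tpos by auto
  qed
  define S where "S = {\<sigma> \<in> DD \<rightarrow>\<^sub>E FF. ?A (ind \<sigma>)}"
  have finS: "finite S" unfolding S_def using finD finF by (simp add: finite_PiE)
  have round: "\<exists>\<sigma>\<in>S. ?cost (ind \<sigma>) \<le> ?cost x" if "?A x" for x
    using round_assign[OF finD finF that, of l] unfolding S_def by blast
  have neS: "S \<noteq> {}" using round[OF x0] by blast
  define c where "c = Min ((\<lambda>\<sigma>. ?cost (ind \<sigma>)) ` S)"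
  have "c \<in> (\<lambda>\<sigma>. ?cost (ind \<sigma>)) ` S" unfolding c_def using finS neS by (intro Min_in) auto
  then obtain \<sigma>0 where s0: "\<sigma>0 \<in> S" "?cost (ind \<sigma>0) = c" by auto
  have cmin: "c \<le> ?cost (ind \<sigma>)" if "\<sigma> \<in> S" for \<sigma>
    unfolding c_def using finS that by simp
  have lower: "c \<le> ?cost x" if "?A x" for x
    using round[OF that] cmin by fastforce
  have s0E: "\<sigma>0 \<in> DD \<rightarrow>\<^sub>E FF" and s0A: "?A (ind \<sigma>0)" using s0(1) unfolding S_def by auto
  have s0F: "\<sigma>0 i \<in> FF" if "i \<in> DD" for i using s0E that by auto
  obtain g where g: "bij_betw g FF {0..<card FF}" using ex_bij_betw_finite_nat[OF finF] by blast
  define h where "h = inv_into FF g"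
  have gF: "g j < card FF" if "j \<in> FF" for j using g that by (auto simp: bij_betw_def)
  have hF: "h s \<in> FF" "g (h s) = s" if "s < card FF" for s
    using that g bij_betw_inv_into_right[OF g] bij_betw_inv_into[OF g] unfolding h_def
    by (auto simp: bij_betw_def)
  have hg: "h (g j) = j" if "j \<in> FF" for j
    using bij_betw_inv_into_left[OF g that] unfolding h_def .
  have Fs: "{j \<in> FF. g j = s} = {h s}" if "s < card FF" for s
    using hF[OF that] hg by auto
  have Ds: "{i \<in> DD. g (\<sigma>0 i) = s} = {i \<in> DD. \<sigma>0 i = h s}" if "s < card FF" for s
    using hF[OF that] hg s0F by auto
  have s0load: "(\<Sum>i\<in>DD. ind \<sigma>0 i j) \<le> real (C j)" if "j \<in> FF" for j
    using s0A that unfolding is_assignment_def by auto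
  define pd where "pd i = g (\<sigma>0 i)" for i
  define xs where "xs = (\<lambda>s::nat. ind \<sigma>0)"
  define bs where "bs = (\<lambda>(s::nat) (j::'f). 0::real)"
  have reg: "is_regionalized (card FF) DD FF l (\<lambda>_. 1) (\<lambda>j. real (C j)) pd g xs bs"
    unfolding is_regionalized_def
  proof (intro conjI allI impI ballI)
    show "pd i < card FF" if "i \<in> DD" for i unfolding pd_def using gF s0F that by simp
    show "g j < card FF" if "j \<in> FF" for j using gF that by simp
    fix s assume s: "s < card FF"
    have sumD: "(\<Sum>i\<in>{i \<in> DD. \<sigma>0 i = h s}. (1::real)) = (\<Sum>i\<in>DD. ind \<sigma>0 i (h s))"
      unfolding ind_def using finD sum.inter_filter[OF finD, of "\<lambda>_. 1::real" "\<lambda>i. \<sigma>0 i = h s"] by simp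
    show "(\<Sum>i\<in>{i \<in> DD. pd i = s}. 1) \<le> (\<Sum>j\<in>{j \<in> FF. g j = s}. real (C j))"
      unfolding pd_def Ds[OF s] Fs[OF s] using sumD s0load[OF hF(1)[OF s]] by simp
    have asg: "is_assignment {i \<in> DD. \<sigma>0 i = h s} {h s} (\<lambda>_. 1) (\<lambda>j. real (C j)) (ind \<sigma>0)"
      unfolding is_assignment_def
    proof (intro conjI ballI)
      show "0 \<le> ind \<sigma>0 i j" for i j unfolding ind_def by simp
      show "(\<Sum>j\<in>{h s}. ind \<sigma>0 i j) = 1" if "i \<in> {i \<in> DD. \<sigma>0 i = h s}" for i
        using that unfolding ind_def by simp
      fix j assume j: "j \<in> {h s}"
      have "(\<Sum>i\<in>{i \<in> DD. \<sigma>0 i = h s}. ind \<sigma>0 i j) \<le> (\<Sum>i\<in>DD. ind \<sigma>0 i j)"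
        using finD by (intro sum_mono2) (auto simp: ind_def)
      also have "\<dots> \<le> real (C j)" using s0load hF(1)[OF s] j by simp
      finally show "(\<Sum>i\<in>{i \<in> DD. \<sigma>0 i = h s}. ind \<sigma>0 i j) \<le> real (C j)" .
    qed
    show "is_equilibrium {i \<in> DD. pd i = s} {j \<in> FF. g j = s} l (\<lambda>_. 1) (\<lambda>j. real (C j)) (xs s) (bs s)"
      unfolding pd_def Ds[OF s] Fs[OF s] is_equilibrium_def xs_def bs_def
      using asg by (simp add: ind_def)
  qed
  have delay: "reg_delay (card FF) DD FF l (\<lambda>_. 1) pd g bs = c"
  proof -
    have "reg_delay (card FF) DD FF l (\<lambda>_. 1) pd g bs
        = (\<Sum>s<card FF. \<Sum>i\<in>{i \<in> DD. pd i = s}. l i (\<sigma>0 i))"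
      unfolding reg_delay_def eq_delay_def
    proof (rule sum.cong[OF refl])
      fix s assume "s \<in> {..<card FF}"
      then have s: "s < card FF" by simp
      show "(\<Sum>i\<in>{i \<in> DD. pd i = s}. 1 * (MIN j\<in>{j \<in> FF. g j = s}. l i j + bs s j))
          = (\<Sum>i\<in>{i \<in> DD. pd i = s}. l i (\<sigma>0 i))"
        unfolding pd_def Ds[OF s] Fs[OF s] bs_def by simp
    qed
    also have "\<dots> = (\<Sum>i\<in>DD. l i (\<sigma>0 i))"
      using finD gF s0F unfolding pd_def by (intro sum.group) auto
    also have "\<dots> = ?cost (ind \<sigma>0)"
      unfolding assignment_cost_def ind_def using finF s0F
      by (intro sum.cong[OF refl]) (simp add: if_distrib cong: if_cong)
    finally show ?thesis using s0(2) by simp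
  qed
  have upper: "c \<le> reg_delay (card FF) DD FF l (\<lambda>_. 1) pd' pf bs'"
    if R: "is_regionalized (card FF) DD FF l (\<lambda>_. 1) (\<lambda>j. real (C j)) pd' pf xs' bs'" for pd' pf xs' bs'
  proof -
    let ?D = "\<lambda>s. {i \<in> DD. pd' i = s}" and ?F = "\<lambda>s. {j \<in> FF. pf j = s}"
    have pdk: "pd' i < card FF" if "i \<in> DD" for i using R that unfolding is_regionalized_def by auto
    have pfk: "pf j < card FF" if "j \<in> FF" for j using R that unfolding is_regionalized_def by auto
    have EQ: "is_equilibrium (?D s) (?F s) l (\<lambda>_. 1) (\<lambda>j. real (C j)) (xs' s) (bs' s)" if "s < card FF" for s
      using R that unfolding is_regionalized_def by auto
    define X where "X i j = (if pf j = pd' i then xs' (pd' i) i j else 0)" for i j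
    have rowX: "(\<Sum>j\<in>FF. l i j * X i j) = (\<Sum>j\<in>?F (pd' i). l i j * xs' (pd' i) i j)" for i
      unfolding X_def using finF by (simp add: sum.inter_filter if_distrib eq_commute cong: if_cong)
    have XA: "?A X" unfolding is_assignment_def
    proof (intro conjI ballI)
      fix i j assume i: "i \<in> DD" and j: "j \<in> FF"
      show "0 \<le> X i j"
        using EQ[OF pdk[OF i]] i j unfolding X_def is_equilibrium_def is_assignment_def by auto
    next
      fix i assume i: "i \<in> DD"
      have "(\<Sum>j\<in>FF. X i j) = (\<Sum>j\<in>?F (pd' i). xs' (pd' i) i j)"
        unfolding X_def sum.inter_filter[OF finF] by (rule sum.cong) auto
      also have "\<dots> = 1" using EQ[OF pdk[OF i]] i unfolding is_equilibrium_def is_assignment_def by auto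
      finally show "(\<Sum>j\<in>FF. X i j) = 1" .
    next
      fix j assume j: "j \<in> FF"
      have "(\<Sum>i\<in>DD. X i j) = (\<Sum>i\<in>?D (pf j). xs' (pf j) i j)"
        unfolding X_def sum.inter_filter[OF finD] by (rule sum.cong) auto
      also have "\<dots> \<le> real (C j)" using EQ[OF pfk[OF j]] j unfolding is_equilibrium_def is_assignment_def by auto
      finally show "(\<Sum>i\<in>DD. X i j) \<le> real (C j)" .
    qed
    have "c \<le> ?cost X" using lower[OF XA] .
    also have "?cost X = (\<Sum>i\<in>DD. \<Sum>j\<in>?F (pd' i). l i j * xs' (pd' i) i j)"
      unfolding assignment_cost_def rowX ..
    also have "\<dots> \<le> (\<Sum>i\<in>DD. 1 * (MIN j\<in>?F (pd' i). l i j + bs' (pd' i) j))"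
    proof (rule sum_mono)
      fix i assume i: "i \<in> DD"
      show "(\<Sum>j\<in>?F (pd' i). l i j * xs' (pd' i) i j) \<le> 1 * (MIN j\<in>?F (pd' i). l i j + bs' (pd' i) j)"
        by (rule eq_bound[OF EQ[OF pdk[OF i]]]) (use i finF in auto)
    qed
    also have "\<dots> = (\<Sum>s<card FF. \<Sum>i\<in>?D s. 1 * (MIN j\<in>?F (pd' i). l i j + bs' (pd' i) j))"
      using finD pdk by (intro sum.group[symmetric]) auto
    also have "\<dots> = reg_delay (card FF) DD FF l (\<lambda>_. 1) pd' pf bs'"
      unfolding reg_delay_def eq_delay_def
      by (intro sum.cong[OF refl]) auto
    finally show ?thesis .
  qed
  show ?thesis
    apply (rule exI[of _ c])
    using s0A s0(2) lower reg delay upper by blast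
qed

end
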